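(* For all integers $b>0$ and $n>0$, $\sum_{i=0}^{n}\Big(2^{bi}\prod_{j=i}^{n}(1-2^j)\Big)<0.$ *)

theory Defs
  imports Main
begin

end

theory Submission
  imports Defs
begin

lemma pw1[simp]: "(1::int) < 2 * 2^k"
proof -
  have "(1::int) \<le> 2^k" by simp
  then show ?thesis by linarith
qed

lemma pw2[simp]: "(1::int) < 4 * 2^k"
proof -
  have "(1::int) \<le> 2^k" by simp
  then show ?thesis by linarith
qed

fun g :: "nat \<Rightarrow> nat \<Rightarrow> int" where
  "g m 0 = 1"
| "g m (Suc n) = 2^((m+1)*(n+1)) - (2^(n+1)-1) * g m n"

lemma g_zero: "g 0 n = 1"
  by (induction n) (auto simp: power_add mult.commute)

lemma g_Suc_m: "g (Suc m) n = 2^((m+1)*(n+1)) - (2^(m+1)-1) * g m n"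
proof (induction n)
  case 0
  then show ?case by simp
next
  case (Suc n)
  have e1: "(2::int)^((Suc m + 1)*(n+1)) = 2^((m+1)*(n+1)) * 2^(n+1)"
    by (simp add: power_add[symmetric] algebra_simps)
  have e2: "(2::int)^((m+1)*(Suc n+1)) = 2^((m+1)*(n+1)) * 2^(m+1)"
    by (simp add: power_add[symmetric] algebra_simps)
  show ?case
  proof -
    have "g (Suc m) (Suc n) = 2^((Suc m + 1)*(n+1)) - (2^(n+1)-1) * g (Suc m) n" by simp
    also have "\<dots> = 2^((m+1)*(n+1)) * 2^(n+1) - (2^(n+1)-1) * (2^((m+1)*(n+1)) - (2^(m+1)-1) * g m n)"
      using Suc e1 by simp
    also have "\<dots> = 2^((m+1)*(n+1)) * 2^(m+1) - (2^(m+1)-1) * (2^((m+1)*(n+1)) - (2^(n+1)-1) * g m n)"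
      by (simp add: algebra_simps)
    also have "\<dots> = 2^((m+1)*(Suc n+1)) - (2^(m+1)-1) * g m (Suc n)"
      using e2 by simp
    finally show ?thesis .
  qed
qed

lemma gA: "N \<le> M + 1 \<Longrightarrow> g M N > 0"
proof (induction N rule: nat_less_induct)
  case (1 N)
  show ?case
  proof (cases N)
    case 0 then show ?thesis by simp
  next
    case (Suc N1)
    show ?thesis
    proof (cases N1)
      case 0
      have "(2::int)^(M+1) > 1" by (simp add: one_less_power)
      then show ?thesis using Suc 0 by simp
    next
      case (Suc n)
      have ih: "g M n > 0" using 1 \<open>N = Suc N1\<close> Suc by auto
      have le: "n + 2 \<le> M + 1" using 1(2) \<open>N = Suc N1\<close> Suc by auto
      have p: "(2::int)^(n+2) \<le> 2^(M+1)"
        using le by (intro power_increasing) auto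
      have two: "g M (Suc (Suc n)) = 2^((M+1)*(n+1)) * (2^(M+1) - 2^(n+2) + 1)
          + (2^(n+2)-1)*(2^(n+1)-1) * g M n"
      proof -
        have e: "(2::int)^((M+1)*(Suc n+1)) = 2^((M+1)*(n+1)) * 2^(M+1)"
          by (simp add: power_add[symmetric] algebra_simps)
        show ?thesis by (simp only: g.simps e) (simp add: algebra_simps)
      qed
      have a: "(2::int)^((M+1)*(n+1)) * (2^(M+1) - 2^(n+2) + 1) > 0"
        using p by (intro mult_pos_pos) auto
      have b1: "(2::int)^(n+2) - 1 > 0" by (simp add: one_less_power)
      have b2: "(2::int)^(n+1) - 1 > 0" by (simp add: one_less_power)
      have b: "(2^(n+2)-1)*(2^(n+1)-1) * g M n > 0"
        using b1 b2 ih by (intro mult_pos_pos) auto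
      show ?thesis using two a b \<open>N = Suc N1\<close> Suc by simp
    qed
  qed
qed

lemma gB: "M \<le> N + 1 \<Longrightarrow> g M N > 0"
proof (induction M rule: nat_less_induct)
  case (1 M)
  show ?case
  proof (cases M)
    case 0 then show ?thesis by (simp add: g_zero)
  next
    case (Suc M1)
    show ?thesis
    proof (cases M1)
      case 0
      have "(2::int)^(N+1) > 1" by (simp add: one_less_power)
      then show ?thesis using Suc 0 by (simp add: g_Suc_m g_zero)
    next
      case (Suc m)
      have ih: "g m N > 0" using 1 \<open>M = Suc M1\<close> Suc by auto
      have le: "m + 2 \<le> N + 1" using 1(2) \<open>M = Suc M1\<close> Suc by auto
      have p: "(2::int)^(m+2) \<le> 2^(N+1)"
        using le by (intro power_increasing) auto
      have two: "g (Suc (Suc m)) N = 2^((m+1)*(N+1)) * (2^(N+1) - 2^(m+2) + 1)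
          + (2^(m+2)-1)*(2^(m+1)-1) * g m N"
      proof -
        have e: "(2::int)^((Suc m+1)*(N+1)) = 2^((m+1)*(N+1)) * 2^(N+1)"
          by (simp add: power_add[symmetric] algebra_simps)
        show ?thesis by (simp only: g_Suc_m e) (simp add: algebra_simps)
      qed
      have a: "(2::int)^((m+1)*(N+1)) * (2^(N+1) - 2^(m+2) + 1) > 0"
        using p by (intro mult_pos_pos) auto
      have b1: "(2::int)^(m+2) - 1 > 0" by (simp add: one_less_power)
      have b2: "(2::int)^(m+1) - 1 > 0" by (simp add: one_less_power)
      have b: "(2^(m+2)-1)*(2^(m+1)-1) * g m N > 0"
        using b1 b2 ih by (intro mult_pos_pos) auto
      show ?thesis using two a b \<open>M = Suc M1\<close> Suc by simp
    qed
  qed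
qed

lemma g_pos: "g M N > 0"
  using gA gB by (cases "N \<le> M + 1") auto

definition S :: "nat \<Rightarrow> nat \<Rightarrow> int" where
  "S b n = (\<Sum>i=0..n. (2::int) ^ (b * i) * (\<Prod>j=i..n. (1 - (2::int) ^ j)))"

lemma S_Suc: "S b (Suc n) = (1 - 2^(Suc n)) * (S b n + 2^(b * Suc n))"
proof -
  have "S b (Suc n) = (\<Sum>i=0..n. (2::int) ^ (b * i) * (\<Prod>j=i..Suc n. (1 - (2::int) ^ j)))
      + 2^(b * Suc n) * (1 - 2^(Suc n))"
    unfolding S_def by (simp add: sum.atLeast0_atMost_Suc)
  also have "(\<Sum>i=0..n. (2::int) ^ (b * i) * (\<Prod>j=i..Suc n. (1 - (2::int) ^ j)))
      = (\<Sum>i=0..n. (2::int) ^ (b * i) * (\<Prod>j=i..n. (1 - (2::int) ^ j)) * (1 - 2^(Suc n)))"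
    by (intro sum.cong refl) (simp add: prod.nat_ivl_Suc' algebra_simps)
  also have "\<dots> = S b n * (1 - 2^(Suc n))"
    unfolding S_def by (simp add: sum_distrib_right)
  finally show ?thesis by (simp add: algebra_simps)
qed

lemma S_T: "S (Suc m) n + 2^(Suc m * (n+1)) = 2^(Suc m) * g m n"
proof (induction n)
  case 0
  then show ?case by (simp add: S_def)
next
  case (Suc n)
  have e: "(2::int)^(Suc m * (Suc n+1)) = 2^(Suc m) * 2^((m+1)*(n+1))"
    by (simp add: power_add[symmetric] algebra_simps)
  have "S (Suc m) (Suc n) = (1 - 2^(Suc n)) * (2^(Suc m) * g m n)"
    using S_Suc Suc by simp
  then show ?case by (simp only: e g.simps) (simp add: algebra_simps)
qed

theorem lemma3:
  fixes b n :: nat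
  assumes "b > 0" and "n > 0"
  shows "(\<Sum>i=0..n. (2::int) ^ (b * i) * (\<Prod>j=i..n. (1 - (2::int) ^ j))) < 0"
proof -
  obtain m where b: "b = Suc m" using assms(1) by (cases b) auto
  obtain k where n: "n = Suc k" using assms(2) by (cases n) auto
  have "S b n = (1 - 2^(Suc k)) * (2^(Suc m) * g m k)"
    using S_Suc[of b k] S_T[of m k] b n by simp
  moreover have "(1::int) - 2^(Suc k) < 0" by (simp add: one_less_power)
  moreover have "(2::int)^(Suc m) * g m k > 0" using g_pos by simp
  ultimately have "S b n < 0" by (simp add: mult_neg_pos)
  then show ?thesis unfolding S_def .
qed

end
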